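(* Consider the interacting innovation model described in the context, suppose $\Gamma$ is irreducible with Perron–Frobenius eigenvalue $\gamma^*\in(0,1)$. Define $\zeta_0=1$ and $\zeta_t=\prod_{k=1}^t\bigl[1-\frac{1-\gamma^*}{k}\bigr]^{-1}$ for $t\ge1$, and $V^*_t=\sum_{j=1}^N Z^*_{t,j}(1-Z^*_{t,j})$ (which equals $\sum_j E[(X^*_{t+1,j}-Z^*_{t,j})^2\mid\mathcal F_t]$, where $X^*_{t+1,j}$ is the indicator that the color drawn from urn $j$ at time $t+1$ is new). Then $$\sum_{t}\frac{\zeta_{t+1}^2}{(t+1)^2}E[V^*_t]<+\infty\qquad\text{and hence}\qquad\sum_t\frac{\zeta_{t+1}^2}{(t+1)^2}V^*_t<+\infty\ \text{almost surely}.$$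
   Context: Fix an integer $N\ge1$, parameters $\theta_1,\dots,\theta_N>0$ and non-negative $N\times N$ matrices $\Gamma=(\gamma_{j,h})$, $\Lambda=(\lambda_{j,h})$ and $W=(w_{j,h})=\Gamma+\Lambda$ such that $\mathbf 1^\top W=\mathbf 1^\top$ (i.e. $\sum_j w_{j,h}=1$ for every $h$), $\sum_j\gamma_{j,h}<1$ for every $h$, and $\lambda_{h,h}>0$ for every $h$; here $\mathbf 1$ denotes the all-ones vector. The model is a system of $N$ interacting urns (agents) with infinitely many possible colors (items). At each time-step $t\ge1$ exactly one color $C_{t,h}$ is drawn from each urn $h=1,\dots,N$. A color drawn at time $t$ is called "new" if it was never drawn from any urn of the system at a time $<t$, and "old" otherwise; by construction the same new color is never drawn simultaneously from two different urns, so every color $c$ that is ever drawn has a unique urn $j^*(c)$ from which it was drawn for the first time. Let $\mathcal F_t$ be the $\sigma$-field generated by all draws up to time $t$. Let $K_t(j,c)$ be the number of $n\le t$ with $C_{n,j}=c$; let $D^*_{t,j}$ be the number of distinct colors whose first drawing in the whole system occurred from urn $j$ at a time $\le t$ (so $D^*_{0,j}=0$); let $D^*_t=\sum_{j}D^*_{t,j}$ (the number of distinct colors drawn in the system up to time $t$); and let $D_{t,h}$ be the number of distinct colors drawn from urn $h$ up to time $t$. Dynamics: conditionally on $\mathcal F_t$, the draws $C_{t+1,1},\dots,C_{t+1,N}$ are independent and, for each $h$, $$P(C_{t+1,h}\text{ is new}\mid\mathcal F_t)=Z^*_{t,h}:=\frac{\theta_h+\sum_{j=1}^N\gamma_{j,h}D^*_{t,j}}{\theta_h+t},$$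 while for each old color $c$ (drawn at some time $\le t$), $$P(C_{t+1,h}=c\mid\mathcal F_t)=P_t(h,c):=\frac{\sum_{j=1}^N w_{j,h}K_t(j,c)-\gamma_{j^*(c),h}}{\theta_h+t}.$$ A non-negative square matrix is irreducible if the directed graph having it as adjacency matrix is strongly connected. *)

theory Defs
  imports "HOL-Probability.Probability" "Jordan_Normal_Form.Spectral_Radius"
begin

(* Urns are indexed by 0..N-1, colours are natural numbers, draws happen at times t >= 1.
   A history is eta :: nat => nat => nat, where eta n h is the colour drawn from urn h at time n;
   only the window 1 <= n <= t, h < N is ever inspected. *)

definition drawn :: "nat \<Rightarrow> (nat \<Rightarrow> nat \<Rightarrow> nat) \<Rightarrow> nat \<Rightarrow> nat set" where
  "drawn N \<eta> t = {\<eta> n h | n h. 1 \<le> n \<and> n \<le> t \<and> h < N}"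

definition Kcnt :: "(nat \<Rightarrow> nat \<Rightarrow> nat) \<Rightarrow> nat \<Rightarrow> nat \<Rightarrow> nat \<Rightarrow> nat" where
  "Kcnt \<eta> t j c = card {n. 1 \<le> n \<and> n \<le> t \<and> \<eta> n j = c}"

definition firsttime :: "nat \<Rightarrow> (nat \<Rightarrow> nat \<Rightarrow> nat) \<Rightarrow> nat \<Rightarrow> nat" where
  "firsttime N \<eta> c = (LEAST n. 1 \<le> n \<and> (\<exists>h<N. \<eta> n h = c))"

definition jstar :: "nat \<Rightarrow> (nat \<Rightarrow> nat \<Rightarrow> nat) \<Rightarrow> nat \<Rightarrow> nat" where
  "jstar N \<eta> c = (LEAST j. j < N \<and> \<eta> (firsttime N \<eta> c) j = c)"

definition Dstar :: "nat \<Rightarrow> (nat \<Rightarrow> nat \<Rightarrow> nat) \<Rightarrow> nat \<Rightarrow> nat \<Rightarrow> nat" where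
  "Dstar N \<eta> t j = card {c \<in> drawn N \<eta> t. jstar N \<eta> c = j}"

definition Zstar :: "nat \<Rightarrow> (nat \<Rightarrow> real) \<Rightarrow> (nat \<Rightarrow> nat \<Rightarrow> real) \<Rightarrow> (nat \<Rightarrow> nat \<Rightarrow> nat) \<Rightarrow> nat \<Rightarrow> nat \<Rightarrow> real" where
  "Zstar N \<theta> \<Gamma> \<eta> t h = (\<theta> h + (\<Sum>j<N. \<Gamma> j h * real (Dstar N \<eta> t j))) / (\<theta> h + real t)"

definition Pold :: "nat \<Rightarrow> (nat \<Rightarrow> real) \<Rightarrow> (nat \<Rightarrow> nat \<Rightarrow> real) \<Rightarrow> (nat \<Rightarrow> nat \<Rightarrow> real)
    \<Rightarrow> (nat \<Rightarrow> nat \<Rightarrow> nat) \<Rightarrow> nat \<Rightarrow> nat \<Rightarrow> nat \<Rightarrow> real" where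
  "Pold N \<theta> \<Gamma> W \<eta> t h c =
     ((\<Sum>j<N. W j h * real (Kcnt \<eta> t j c)) - \<Gamma> (jstar N \<eta> c) h) / (\<theta> h + real t)"

(* conditional probability, given history eta up to time t, that urn h produces outcome y at time t+1:
   None = a new colour, Some c = the old colour c *)
definition stepprob :: "nat \<Rightarrow> (nat \<Rightarrow> real) \<Rightarrow> (nat \<Rightarrow> nat \<Rightarrow> real) \<Rightarrow> (nat \<Rightarrow> nat \<Rightarrow> real)
    \<Rightarrow> (nat \<Rightarrow> nat \<Rightarrow> nat) \<Rightarrow> nat \<Rightarrow> nat \<Rightarrow> nat option \<Rightarrow> real" where
  "stepprob N \<theta> \<Gamma> W \<eta> t h y = (case y of
       None \<Rightarrow> Zstar N \<theta> \<Gamma> \<eta> t h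
     | Some c \<Rightarrow> (if c \<in> drawn N \<eta> t then Pold N \<theta> \<Gamma> W \<eta> t h c else 0))"

definition outcome :: "nat \<Rightarrow> (nat \<Rightarrow> nat \<Rightarrow> nat) \<Rightarrow> nat \<Rightarrow> nat \<Rightarrow> nat option" where
  "outcome N \<eta> t h = (if \<eta> (Suc t) h \<in> drawn N \<eta> t then Some (\<eta> (Suc t) h) else None)"

definition histev :: "'w measure \<Rightarrow> nat \<Rightarrow> (nat \<Rightarrow> nat \<Rightarrow> 'w \<Rightarrow> nat) \<Rightarrow> nat \<Rightarrow> (nat \<Rightarrow> nat \<Rightarrow> nat) \<Rightarrow> 'w set" where
  "histev M N C t \<eta> = {\<omega> \<in> space M. \<forall>n h. 1 \<le> n \<and> n \<le> t \<and> h < N \<longrightarrow> C n h \<omega> = \<eta> n h}"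

(* The interacting innovation model: C n h \<omega> is the colour drawn from urn h at time n. *)
definition innovation_model :: "'w measure \<Rightarrow> nat \<Rightarrow> (nat \<Rightarrow> real) \<Rightarrow> (nat \<Rightarrow> nat \<Rightarrow> real)
    \<Rightarrow> (nat \<Rightarrow> nat \<Rightarrow> real) \<Rightarrow> (nat \<Rightarrow> nat \<Rightarrow> 'w \<Rightarrow> nat) \<Rightarrow> bool" where
  "innovation_model M N \<theta> \<Gamma> W C \<longleftrightarrow>
     prob_space M \<and>
     (\<forall>n h. C n h \<in> measurable M (count_space UNIV)) \<and>
     \<comment> \<open>the same new colour is never drawn simultaneously from two different urns\<close>
     (AE \<omega> in M. \<forall>t h h'. h < N \<and> h' < N \<and> h \<noteq> h' \<and>
        outcome N (\<lambda>n k. C n k \<omega>) t h = None \<longrightarrow> C (Suc t) h \<omega> \<noteq> C (Suc t) h' \<omega>) \<and>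
     \<comment> \<open>conditionally on F_t the N draws at time t+1 are independent with the prescribed laws\<close>
     (\<forall>t \<eta> (y :: nat \<Rightarrow> nat option).
        measure M {\<omega> \<in> histev M N C t \<eta>. \<forall>h<N. outcome N (\<lambda>n k. C n k \<omega>) t h = y h}
        = measure M (histev M N C t \<eta>) * (\<Prod>h<N. stepprob N \<theta> \<Gamma> W \<eta> t h (y h)))"

definition irreducible_mat :: "nat \<Rightarrow> (nat \<Rightarrow> nat \<Rightarrow> real) \<Rightarrow> bool" where
  "irreducible_mat N A \<longleftrightarrow>
     (\<forall>i<N. \<forall>j<N. (i, j) \<in> {(a, b). a < N \<and> b < N \<and> A a b > 0}\<^sup>*)"

(* Perron-Frobenius eigenvalue of a non-negative matrix = its spectral radius *)
definition pf_eigenvalue :: "nat \<Rightarrow> (nat \<Rightarrow> nat \<Rightarrow> real) \<Rightarrow> real" where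
  "pf_eigenvalue N A = spectral_radius (mat N N (\<lambda>(i, j). complex_of_real (A i j)))"

definition zeta :: "real \<Rightarrow> nat \<Rightarrow> real" where
  "zeta g t = (\<Prod>k\<in>{1..t}. inverse (1 - (1 - g) / real k))"

definition Vstar :: "nat \<Rightarrow> (nat \<Rightarrow> real) \<Rightarrow> (nat \<Rightarrow> nat \<Rightarrow> real) \<Rightarrow> (nat \<Rightarrow> nat \<Rightarrow> 'w \<Rightarrow> nat) \<Rightarrow> nat \<Rightarrow> 'w \<Rightarrow> real" where
  "Vstar N \<theta> \<Gamma> C t \<omega> = (\<Sum>j<N. Zstar N \<theta> \<Gamma> (\<lambda>n k. C n k \<omega>) t j * (1 - Zstar N \<theta> \<Gamma> (\<lambda>n k. C n k \<omega>) t j))"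

end

theory Submission
  imports Defs
begin


definition win :: "nat \<Rightarrow> nat \<Rightarrow> (nat\<Rightarrow>nat\<Rightarrow>nat) \<Rightarrow> (nat\<Rightarrow>nat\<Rightarrow>nat)" where
  "win N t \<eta> = (\<lambda>n h. if 1 \<le> n \<and> n \<le> t \<and> h < N then \<eta> n h else 0)"

lemma win_win: "t \<le> T \<Longrightarrow> win N t (win N T \<eta>) = win N t \<eta>"
  by (auto simp: win_def fun_eq_iff)

lemma win_idem: "win N t (win N t \<eta>) = win N t \<eta>"
  by (auto simp: win_def fun_eq_iff)

lemma drawn_win: "drawn N (win N t \<eta>) t = drawn N \<eta> t"
proof -
  have "\<And>c. (\<exists>n h. c = win N t \<eta> n h \<and> 1 \<le> n \<and> n \<le> t \<and> h < N) = (\<exists>n h. c = \<eta> n h \<and> 1 \<le> n \<and> n \<le> t \<and> h < N)"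
    by (auto simp: win_def)
  thus ?thesis unfolding drawn_def by blast
qed

lemma drawn_eq_image: "drawn N \<eta> t = (\<lambda>(n,h). \<eta> n h) ` ({1..t} \<times> {..<N})"
  unfolding drawn_def by (auto simp: image_def) blast

lemma drawn_memI: "1 \<le> n \<Longrightarrow> n \<le> t \<Longrightarrow> h < N \<Longrightarrow> \<eta> n h \<in> drawn N \<eta> t"
  unfolding drawn_def by blast

lemma finite_drawn: "finite (drawn N \<eta> t)"
  unfolding drawn_eq_image by auto

lemma drawn_0: "drawn N \<eta> 0 = {}"
  unfolding drawn_def by auto

lemma ft_props:
  assumes "c \<in> drawn N \<eta> t"
  shows "1 \<le> firsttime N \<eta> c" "firsttime N \<eta> c \<le> t" "\<exists>h<N. \<eta> (firsttime N \<eta> c) h = c"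
proof -
  from assms obtain n h where nh: "1 \<le> n" "n \<le> t" "h < N" "\<eta> n h = c" unfolding drawn_def by auto
  have P: "1 \<le> n \<and> (\<exists>h<N. \<eta> n h = c)" using nh by auto
  show "1 \<le> firsttime N \<eta> c" "\<exists>h<N. \<eta> (firsttime N \<eta> c) h = c"
    using LeastI[of "\<lambda>n. 1 \<le> n \<and> (\<exists>h<N. \<eta> n h = c)", OF P] unfolding firsttime_def by auto
  have "firsttime N \<eta> c \<le> n" unfolding firsttime_def by (rule Least_le) (use P in auto)
  thus "firsttime N \<eta> c \<le> t" using nh by auto
qed

lemma jstar_props:
  assumes "c \<in> drawn N \<eta> t"
  shows "jstar N \<eta> c < N" "\<eta> (firsttime N \<eta> c) (jstar N \<eta> c) = c"
proof -
  obtain h where h: "h < N" "\<eta> (firsttime N \<eta> c) h = c" using ft_props(3)[OF assms] by auto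
  show "jstar N \<eta> c < N" "\<eta> (firsttime N \<eta> c) (jstar N \<eta> c) = c"
    using LeastI[of "\<lambda>j. j < N \<and> \<eta> (firsttime N \<eta> c) j = c", of h] h unfolding jstar_def by auto
qed

lemma ft_win:
  assumes "c \<in> drawn N \<eta> t"
  shows "firsttime N (win N t \<eta>) c = firsttime N \<eta> c"
proof -
  let ?f = "firsttime N \<eta> c"
  note p = ft_props[OF assms]
  show ?thesis unfolding firsttime_def[of N "win N t \<eta>"]
  proof (rule Least_equality)
    show "1 \<le> ?f \<and> (\<exists>h<N. win N t \<eta> ?f h = c)" using p by (auto simp: win_def)
    fix y assume y: "1 \<le> y \<and> (\<exists>h<N. win N t \<eta> y h = c)"
    show "?f \<le> y"
    proof (cases "y \<le> t")
      case True
      then have "1 \<le> y \<and> (\<exists>h<N. \<eta> y h = c)" using y by (auto simp: win_def)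
      thus ?thesis unfolding firsttime_def by (rule Least_le)
    next
      case False thus ?thesis using p by auto
    qed
  qed
qed

lemma jstar_win:
  assumes "c \<in> drawn N \<eta> t"
  shows "jstar N (win N t \<eta>) c = jstar N \<eta> c"
proof -
  have "\<And>j. j < N \<Longrightarrow> win N t \<eta> (firsttime N \<eta> c) j = \<eta> (firsttime N \<eta> c) j"
    using ft_props[OF assms] by (auto simp: win_def)
  hence "(\<lambda>j. j < N \<and> win N t \<eta> (firsttime N \<eta> c) j = c) = (\<lambda>j. j < N \<and> \<eta> (firsttime N \<eta> c) j = c)"
    by auto
  thus ?thesis unfolding jstar_def ft_win[OF assms] by simp
qed

lemma Dstar_win: "Dstar N (win N t \<eta>) t j = Dstar N \<eta> t j"
proof -
  have "{c \<in> drawn N (win N t \<eta>) t. jstar N (win N t \<eta>) c = j} = {c \<in> drawn N \<eta> t. jstar N \<eta> c = j}"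
    using jstar_win drawn_win by auto
  thus ?thesis unfolding Dstar_def by simp
qed

lemma Kcnt_win: "j < N \<Longrightarrow> Kcnt (win N t \<eta>) t j c = Kcnt \<eta> t j c"
proof -
  assume j: "j < N"
  have "{n. 1 \<le> n \<and> n \<le> t \<and> win N t \<eta> n j = c} = {n. 1 \<le> n \<and> n \<le> t \<and> \<eta> n j = c}"
    using j by (auto simp: win_def)
  thus ?thesis unfolding Kcnt_def by simp
qed

lemma Zstar_win: "Zstar N \<theta> \<Gamma> (win N t \<eta>) t h = Zstar N \<theta> \<Gamma> \<eta> t h"
  unfolding Zstar_def Dstar_win ..

lemma stepprob_win: "stepprob N \<theta> \<Gamma> W (win N t \<eta>) t h y = stepprob N \<theta> \<Gamma> W \<eta> t h y"
proof (cases y)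
  case None thus ?thesis by (simp add: stepprob_def Zstar_win)
next
  case (Some c)
  show ?thesis
  proof (cases "c \<in> drawn N \<eta> t")
    case True
    have "(\<Sum>j<N. W j h * real (Kcnt (win N t \<eta>) t j c)) = (\<Sum>j<N. W j h * real (Kcnt \<eta> t j c))"
      by (rule sum.cong) (auto simp: Kcnt_win)
    thus ?thesis using True Some by (simp add: stepprob_def drawn_win Pold_def jstar_win)
  next
    case False thus ?thesis using Some by (simp add: stepprob_def drawn_win)
  qed
qed

lemma outcome_win: "h < N \<Longrightarrow> outcome N (win N (Suc t) \<eta>) t h = outcome N \<eta> t h"
proof -
  assume h: "h < N"
  have "drawn N (win N (Suc t) \<eta>) t = drawn N \<eta> t"
    by (metis drawn_win le_SucI order_refl win_win)
  moreover have "win N (Suc t) \<eta> (Suc t) h = \<eta> (Suc t) h" using h by (simp add: win_def)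
  ultimately show ?thesis by (simp add: outcome_def)
qed

lemma Dstar_le: "Dstar N \<eta> t j \<le> t"
proof -
  let ?S = "{c \<in> drawn N \<eta> t. jstar N \<eta> c = j}"
  have "inj_on (firsttime N \<eta>) ?S"
  proof (rule inj_onI)
    fix c c' assume "c \<in> ?S" "c' \<in> ?S" "firsttime N \<eta> c = firsttime N \<eta> c'"
    thus "c = c'" using jstar_props(2)[of c N \<eta> t] jstar_props(2)[of c' N \<eta> t] by auto
  qed
  moreover have "firsttime N \<eta> ` ?S \<subseteq> {1..t}" using ft_props by fastforce
  ultimately have "card ?S \<le> card {1..t}" by (meson card_inj_on_le finite_atLeastAtMost)
  thus ?thesis unfolding Dstar_def by simp
qed

lemma Dstar_0: "Dstar N \<eta> 0 j = 0"
  unfolding Dstar_def drawn_0 by simp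

lemma drawn_Suc: "drawn N \<eta> (Suc t) = drawn N \<eta> t \<union> {\<eta> (Suc t) h | h. h < N}"
  unfolding drawn_def by (auto simp: le_Suc_eq)

lemma Dstar_Suc: "Dstar N \<eta> (Suc t) j \<le> Dstar N \<eta> t j + (if outcome N \<eta> t j = None then 1 else 0)"
proof -
  let ?S = "\<lambda>t. {c \<in> drawn N \<eta> t. jstar N \<eta> c = j}"
  let ?E = "if outcome N \<eta> t j = None then {\<eta> (Suc t) j} else {}"
  have sub: "?S (Suc t) \<subseteq> ?S t \<union> ?E"
  proof
    fix c assume c: "c \<in> ?S (Suc t)"
    show "c \<in> ?S t \<union> ?E"
    proof (cases "c \<in> drawn N \<eta> t")
      case True thus ?thesis using c by auto
    next
      case False
      have f: "firsttime N \<eta> c \<le> Suc t" "1 \<le> firsttime N \<eta> c" using ft_props c by auto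
      have "firsttime N \<eta> c = Suc t"
      proof (rule ccontr)
        assume "firsttime N \<eta> c \<noteq> Suc t"
        hence "firsttime N \<eta> c \<le> t" using f by auto
        note ft = this
        obtain h where hh: "h < N" "\<eta> (firsttime N \<eta> c) h = c" using ft_props(3)[of c N \<eta> "Suc t"] c by auto
        have "c \<in> drawn N \<eta> t" unfolding drawn_def mem_Collect_eq
          by (rule exI[of _ "firsttime N \<eta> c"], rule exI[of _ h]) (use hh ft f in auto)
        with False show False by simp
      qed
      with jstar_props(2)[of c N \<eta> "Suc t"] c have "\<eta> (Suc t) j = c" by auto
      with False show ?thesis by (auto simp: outcome_def)
    qed
  qed
  have fin: "finite (?S t)" using finite_drawn by auto
  have "card (?S (Suc t)) \<le> card (?S t \<union> ?E)" by (rule card_mono) (use fin sub in auto)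
  also have "\<dots> \<le> card (?S t) + card ?E" by (rule card_Un_le)
  finally show ?thesis unfolding Dstar_def by (auto split: if_splits)
qed




lemma sum_Kcnt:
  assumes i: "i < N"
  shows "(\<Sum>c\<in>drawn N \<eta> t. real (Kcnt \<eta> t i c)) = real t"
proof -
  have sub: "(\<lambda>n. \<eta> n i) ` {1..t} \<subseteq> drawn N \<eta> t" using i by (auto intro: drawn_memI)
  have "(\<Sum>c\<in>drawn N \<eta> t. card {n \<in> {1..t}. \<eta> n i = c}) = card {1..t}"
    using sum.group[OF finite_atLeastAtMost finite_drawn sub, of "\<lambda>_. (1::nat)"] by simp
  moreover have "\<And>c. {n \<in> {1..t}. \<eta> n i = c} = {n. 1 \<le> n \<and> n \<le> t \<and> \<eta> n i = c}" by auto
  ultimately have "(\<Sum>c\<in>drawn N \<eta> t. Kcnt \<eta> t i c) = t" unfolding Kcnt_def by simp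
  hence "real (\<Sum>c\<in>drawn N \<eta> t. Kcnt \<eta> t i c) = real t" by simp
  thus ?thesis by simp
qed

lemma sum_jstar:
  "(\<Sum>c\<in>drawn N \<eta> t. G (jstar N \<eta> c) h) = (\<Sum>i<N. G i h * real (Dstar N \<eta> t i))"
proof -
  have "(\<Sum>c\<in>drawn N \<eta> t. G (jstar N \<eta> c) h) = (\<Sum>i<N. \<Sum>c\<in>{c \<in> drawn N \<eta> t. jstar N \<eta> c = i}. G (jstar N \<eta> c) h)"
    using sum.group[of "drawn N \<eta> t" "{..<N}" "jstar N \<eta>" "\<lambda>c. G (jstar N \<eta> c) h"] finite_drawn jstar_props(1)
    by fastforce
  also have "\<dots> = (\<Sum>i<N. \<Sum>c\<in>{c \<in> drawn N \<eta> t. jstar N \<eta> c = i}. G i h)"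
    by (intro sum.cong) auto
  also have "\<dots> = (\<Sum>i<N. G i h * real (Dstar N \<eta> t i))"
    unfolding Dstar_def by (simp add: mult.commute)
  finally show ?thesis .
qed

lemma sigma_one:
  assumes h: "h < N" and th: "\<theta> h > 0" and Wc: "(\<Sum>j<N. W j h) = 1"
  shows "Zstar N \<theta> \<Gamma> \<eta> t h + (\<Sum>c\<in>drawn N \<eta> t. Pold N \<theta> \<Gamma> W \<eta> t h c) = 1"
proof -
  let ?D = "drawn N \<eta> t"
  have d: "\<theta> h + real t > 0" using th by simp
  have "(\<Sum>c\<in>?D. \<Sum>j<N. W j h * real (Kcnt \<eta> t j c)) = (\<Sum>j<N. W j h * (\<Sum>c\<in>?D. real (Kcnt \<eta> t j c)))"
    by (subst sum.swap) (simp add: sum_distrib_left)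
  also have "\<dots> = (\<Sum>j<N. W j h * real t)" by (intro sum.cong) (auto simp: sum_Kcnt)
  also have "\<dots> = real t" using Wc by (simp add: sum_distrib_right[symmetric])
  finally have A: "(\<Sum>c\<in>?D. \<Sum>j<N. W j h * real (Kcnt \<eta> t j c)) = real t" .
  have "(\<Sum>c\<in>?D. Pold N \<theta> \<Gamma> W \<eta> t h c)
      = ((\<Sum>c\<in>?D. \<Sum>j<N. W j h * real (Kcnt \<eta> t j c)) - (\<Sum>c\<in>?D. \<Gamma> (jstar N \<eta> c) h)) / (\<theta> h + real t)"
    unfolding Pold_def by (simp add: sum_divide_distrib[symmetric] sum_subtractf)
  also have "\<dots> = (real t - (\<Sum>i<N. \<Gamma> i h * real (Dstar N \<eta> t i))) / (\<theta> h + real t)"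
    unfolding A sum_jstar ..
  finally show ?thesis unfolding Zstar_def using d by (simp add: field_simps)
qed

lemma Zstar_bounds:
  assumes h: "h < N" and th: "\<theta> h > 0" and G: "\<forall>j<N. \<Gamma> j h \<ge> 0" and Gc: "(\<Sum>j<N. \<Gamma> j h) < 1"
  shows "0 \<le> Zstar N \<theta> \<Gamma> \<eta> t h" "Zstar N \<theta> \<Gamma> \<eta> t h \<le> 1"
proof -
  have s0: "0 \<le> (\<Sum>j<N. \<Gamma> j h * real (Dstar N \<eta> t j))" using G by (intro sum_nonneg) auto
  have "(\<Sum>j<N. \<Gamma> j h * real (Dstar N \<eta> t j)) \<le> (\<Sum>j<N. \<Gamma> j h * real t)"
    using G Dstar_le by (intro sum_mono mult_left_mono) auto
  also have "\<dots> = (\<Sum>j<N. \<Gamma> j h) * real t" by (simp add: sum_distrib_right)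
  also have "\<dots> \<le> 1 * real t" by (rule mult_right_mono) (use Gc in auto)
  also have "\<dots> = real t" by simp
  finally have s1: "(\<Sum>j<N. \<Gamma> j h * real (Dstar N \<eta> t j)) \<le> real t" .
  show "0 \<le> Zstar N \<theta> \<Gamma> \<eta> t h" unfolding Zstar_def using s0 th by simp
  show "Zstar N \<theta> \<Gamma> \<eta> t h \<le> 1" unfolding Zstar_def using s1 th by simp
qed




fun Pw :: "nat \<Rightarrow> (nat \<Rightarrow> nat \<Rightarrow> real) \<Rightarrow> nat \<Rightarrow> nat \<Rightarrow> nat \<Rightarrow> real" where
  "Pw N G 0 i j = (if i = j then 1 else 0)"
| "Pw N G (Suc k) i j = (\<Sum>l<N. Pw N G k i l * G l j)"

lemma Pw_left: "i < N \<Longrightarrow> j < N \<Longrightarrow> Pw N G (Suc k) i j = (\<Sum>l<N. G i l * Pw N G k l j)"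
proof (induction k arbitrary: j)
  case 0
  have "(\<Sum>l<N. (if i = l then 1 else 0) * G l j) = (\<Sum>l<N. if i = l then G l j else 0)"
    by (rule sum.cong) auto
  hence "(\<Sum>l<N. (if i = l then 1 else 0) * G l j) = G i j" using 0 by simp
  moreover have "(\<Sum>l<N. G i l * (if l = j then 1 else 0)) = G i j" using 0 by (simp add: if_distrib sum.delta' cong: if_cong)
  ultimately show ?case by simp
next
  case (Suc k)
  have "Pw N G (Suc (Suc k)) i j = (\<Sum>m<N. Pw N G (Suc k) i m * G m j)" by simp
  also have "\<dots> = (\<Sum>m<N. (\<Sum>l<N. G i l * Pw N G k l m) * G m j)"
    using Suc by (intro sum.cong) auto
  also have "\<dots> = (\<Sum>l<N. G i l * (\<Sum>m<N. Pw N G k l m * G m j))"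
    by (simp add: sum_distrib_left sum_distrib_right mult.assoc) (rule sum.swap)
  also have "\<dots> = (\<Sum>l<N. G i l * Pw N G (Suc k) l j)" by simp
  finally show ?case .
qed

lemma Pw_nonneg: "(\<forall>i<N. \<forall>j<N. G i j \<ge> 0) \<Longrightarrow> i < N \<Longrightarrow> j < N \<Longrightarrow> Pw N G k i j \<ge> 0"
  by (induction k arbitrary: j) (auto intro!: sum_nonneg)

lemma Pw_scale: "Pw N (\<lambda>i j. G i j / a) k i j = Pw N G k i j / a ^ k"
  by (induction k arbitrary: j) (auto simp: sum_divide_distrib mult.commute)

lemma Pw_mat:
  assumes "i < N" "j < N"
  shows "(mat N N (\<lambda>(i, j). complex_of_real (G i j)) ^\<^sub>m k) $$ (i,j) = complex_of_real (Pw N G k i j)"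
  using assms
proof (induction k arbitrary: j)
  case 0 thus ?case by simp
next
  case (Suc k)
  let ?A = "mat N N (\<lambda>(i, j). complex_of_real (G i j))"
  have c: "?A ^\<^sub>m k \<in> carrier_mat N N" by simp
  have "(?A ^\<^sub>m Suc k) $$ (i,j) = row (?A ^\<^sub>m k) i \<bullet> col ?A j"
    using Suc.prems c by simp
  also have "\<dots> = (\<Sum>l\<in>{0..<N}. complex_of_real (Pw N G k i l) * complex_of_real (G l j))"
    unfolding scalar_prod_def using Suc c by (intro sum.cong) auto
  also have "\<dots> = complex_of_real (Pw N G (Suc k) i j)"
    by (simp add: lessThan_atLeast0)
  finally show ?case .
qed

lemma exists_u:
  fixes \<Gamma> :: "nat \<Rightarrow> nat \<Rightarrow> real"
  assumes N: "N \<ge> 1" and G: "\<forall>i<N. \<forall>j<N. \<Gamma> i j \<ge> 0"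
    and g: "0 < pf_eigenvalue N \<Gamma>" and g2: "pf_eigenvalue N \<Gamma> < \<gamma>2"
  shows "\<exists>u. (\<forall>i<N. u i \<ge> 1) \<and> (\<forall>i<N. (\<Sum>j<N. \<Gamma> i j * u j) \<le> \<gamma>2 * u i)"
proof -
  define g where "g = pf_eigenvalue N \<Gamma>"
  define \<gamma>1 where "\<gamma>1 = (g + \<gamma>2) / 2"
  have g1: "g < \<gamma>1" "\<gamma>1 < \<gamma>2" "0 < \<gamma>1" "0 < \<gamma>2" using g g2 unfolding \<gamma>1_def g_def by auto
  define A where "A = mat N N (\<lambda>(i, j). complex_of_real (\<Gamma> i j))"
  define A1 where "A1 = mat N N (\<lambda>(i, j). complex_of_real (\<Gamma> i j / \<gamma>1))"
  have Ac: "A \<in> carrier_mat N N" and A1c: "A1 \<in> carrier_mat N N" unfolding A_def A1_def by auto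
  have Np: "N > 0" using N by simp
  have ev_bound: "norm ev < 1" if ev: "ev \<in> spectrum A1" for ev
  proof -
    from ev obtain v where v: "eigenvector A1 v ev" unfolding spectrum_def eigenvalue_def by auto
    hence vc: "v \<in> carrier_vec N" "v \<noteq> 0\<^sub>v N" "A1 *\<^sub>v v = ev \<cdot>\<^sub>v v"
      unfolding eigenvector_def using A1c by auto
    have "A *\<^sub>v v = (complex_of_real \<gamma>1 * ev) \<cdot>\<^sub>v v"
    proof (rule eq_vecI)
      fix i assume i: "i < dim_vec ((complex_of_real \<gamma>1 * ev) \<cdot>\<^sub>v v)"
      hence iN: "i < N" using vc by simp
      have e1: "vec_index (A *\<^sub>v v) i = (\<Sum>l\<in>{0..<N}. complex_of_real (\<Gamma> i l) * vec_index v l)"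
        using iN vc(1) unfolding A_def by (simp add: scalar_prod_def)
      have e2: "vec_index (A1 *\<^sub>v v) i = (\<Sum>l\<in>{0..<N}. complex_of_real (\<Gamma> i l / \<gamma>1) * vec_index v l)"
        using iN vc(1) unfolding A1_def by (simp add: scalar_prod_def)
      have "vec_index (A1 *\<^sub>v v) i = vec_index (ev \<cdot>\<^sub>v v) i" using vc(3) by (rule arg_cong)
      also have "\<dots> = ev * vec_index v i" using vc(1) iN by simp
      finally have e3: "vec_index (A1 *\<^sub>v v) i = ev * vec_index v i" .
      have e4: "(\<Sum>l\<in>{0..<N}. complex_of_real (\<Gamma> i l) * vec_index v l)
          = complex_of_real \<gamma>1 * (\<Sum>l\<in>{0..<N}. complex_of_real (\<Gamma> i l / \<gamma>1) * vec_index v l)"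
        using g1 by (auto simp: sum_distrib_left intro!: sum.cong)
      have F: "vec_index (A *\<^sub>v v) i = complex_of_real \<gamma>1 * vec_index (A1 *\<^sub>v v) i"
        by (simp only: e1 e2 e4)
      show "vec_index (A *\<^sub>v v) i = vec_index ((complex_of_real \<gamma>1 * ev) \<cdot>\<^sub>v v) i"
        unfolding F e3 using iN vc by simp
    qed (use vc Ac in simp)
    hence "eigenvector A v (complex_of_real \<gamma>1 * ev)" unfolding eigenvector_def using vc Ac by simp
    hence "complex_of_real \<gamma>1 * ev \<in> spectrum A" unfolding spectrum_def eigenvalue_def by auto
    hence "norm (complex_of_real \<gamma>1 * ev) \<le> g"
      using spectral_radius_mem_max(2)[OF Ac Np] unfolding g_def pf_eigenvalue_def A_def by auto
    hence "\<gamma>1 * norm ev \<le> g" using g1 by (simp add: norm_mult)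
    hence "\<gamma>1 * norm ev < \<gamma>1 * 1" using g1 by linarith
    thus ?thesis using g1 mult_less_cancel_left_pos by blast
  qed
  have "spectral_radius A1 < 1"
    unfolding spectral_radius_def
    using card_finite_spectrum(1)[OF A1c] spectrum_non_empty[OF A1c Np] ev_bound
    by (subst Max_less_iff) auto
  from spectral_radius_jnf_norm_bound_less_1_upper_triangular[OF A1c this]
  obtain c where c: "\<And>k. norm_bound (A1 ^\<^sub>m k) c" by auto
  have Pwb: "Pw N \<Gamma> k i j \<le> c * \<gamma>1 ^ k" if ij: "i < N" "j < N" for k i j
  proof -
    have "norm ((A1 ^\<^sub>m k) $$ (i,j)) \<le> c" using c[of k] ij A1c unfolding norm_bound_def by auto
    also have "(A1 ^\<^sub>m k) $$ (i,j) = complex_of_real (Pw N \<Gamma> k i j / \<gamma>1 ^ k)"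
      unfolding A1_def Pw_mat[OF ij] Pw_scale ..
    finally have "norm (complex_of_real (Pw N \<Gamma> k i j / \<gamma>1 ^ k)) \<le> c" .
    hence "\<bar>Pw N \<Gamma> k i j / \<gamma>1 ^ k\<bar> \<le> c" by (simp only: norm_of_real)
    hence "Pw N \<Gamma> k i j / \<gamma>1 ^ k \<le> c" using abs_ge_self order_trans by blast
    thus ?thesis using g1 by (simp add: divide_le_eq mult.commute)
  qed
  have "c \<ge> 0" using Pwb[of 0 0 0] Np by simp
  obtain K0 where K0: "(\<gamma>1/\<gamma>2) ^ K0 < 1 / (c * real N + 1)"
  proof -
    have "0 < c * real N + 1" using \<open>c \<ge> 0\<close> by (simp add: add_nonneg_pos)
    moreover have "\<gamma>1/\<gamma>2 < 1" using g1 by simp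
    ultimately show ?thesis using real_arch_pow_inv[of "1 / (c * real N + 1)" "\<gamma>1/\<gamma>2"] that by auto
  qed
  define K where "K = Suc K0"
  have rK: "(\<gamma>1/\<gamma>2) ^ K \<le> (\<gamma>1/\<gamma>2) ^ K0"
    unfolding K_def using g1 by (intro power_decreasing) auto
  define u where "u i = (\<Sum>k<K. \<Sum>j<N. Pw N \<Gamma> k i j / \<gamma>2 ^ k)" for i
  show ?thesis
  proof (intro exI[of _ u] conjI allI impI)
    fix i assume i: "i < N"
    have "u i = (\<Sum>j<N. Pw N \<Gamma> 0 i j) + (\<Sum>k\<in>{1..<K}. \<Sum>j<N. Pw N \<Gamma> k i j / \<gamma>2 ^ k)"
      unfolding u_def K_def by (simp add: sum.atLeast_Suc_lessThan lessThan_atLeast0)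
    also have "(\<Sum>j<N. Pw N \<Gamma> 0 i j) = 1" using i by (simp add: sum.delta)
    finally have ue: "u i = 1 + (\<Sum>k\<in>{1..<K}. \<Sum>j<N. Pw N \<Gamma> k i j / \<gamma>2 ^ k)" .
    have "0 \<le> (\<Sum>k\<in>{1..<K}. \<Sum>j<N. Pw N \<Gamma> k i j / \<gamma>2 ^ k)"
      using Pw_nonneg[OF G] i g1 by (intro sum_nonneg divide_nonneg_pos) auto
    thus "u i \<ge> 1" using ue by simp
  next
    fix i assume i: "i < N"
    have "(\<Sum>l<N. \<Gamma> i l * u l) = (\<Sum>k<K. \<Sum>j<N. (\<Sum>l<N. \<Gamma> i l * Pw N \<Gamma> k l j) / \<gamma>2 ^ k)"
      unfolding u_def by (simp add: sum_distrib_left sum_divide_distrib) (subst sum.swap, rule sum.cong, simp, subst sum.swap, simp add: mult.assoc)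
    also have "\<dots> = (\<Sum>k<K. \<Sum>j<N. Pw N \<Gamma> (Suc k) i j / \<gamma>2 ^ k)"
      using i by (intro sum.cong refl) (simp del: Pw.simps add: Pw_left)
    also have "\<dots> = \<gamma>2 * (\<Sum>k<K. \<Sum>j<N. Pw N \<Gamma> (Suc k) i j / \<gamma>2 ^ Suc k)"
      using g1 by (auto simp del: Pw.simps simp add: sum_distrib_left intro!: sum.cong)
    also have "(\<Sum>k<K. \<Sum>j<N. Pw N \<Gamma> (Suc k) i j / \<gamma>2 ^ Suc k)
        = (\<Sum>k<Suc K. \<Sum>j<N. Pw N \<Gamma> k i j / \<gamma>2 ^ k) - (\<Sum>j<N. Pw N \<Gamma> 0 i j)"
      by (subst sum.lessThan_Suc_shift) simp
    also have "\<dots> = u i + (\<Sum>j<N. Pw N \<Gamma> K i j / \<gamma>2 ^ K) - 1"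
      using i by (simp add: u_def sum.delta)
    also have "(\<Sum>j<N. Pw N \<Gamma> K i j / \<gamma>2 ^ K) \<le> (\<Sum>j<N. c * (\<gamma>1/\<gamma>2) ^ K)"
      using Pwb i g1 by (intro sum_mono) (auto simp: power_divide divide_right_mono)
    also have "\<dots> = real N * c * (\<gamma>1/\<gamma>2) ^ K" by simp
    also have "\<dots> \<le> 1"
    proof -
      have "real N * c * (\<gamma>1/\<gamma>2) ^ K \<le> real N * c * (1 / (c * real N + 1))"
        using rK K0 \<open>c \<ge> 0\<close> by (intro mult_left_mono) auto
      also have "\<dots> \<le> 1" using \<open>c \<ge> 0\<close> by (simp add: divide_le_eq add_nonneg_pos not_less)
      finally show ?thesis .
    qed
    finally show "(\<Sum>l<N. \<Gamma> i l * u l) \<le> \<gamma>2 * u i" using g1 by (simp add: mult_left_mono)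
  qed
qed




definition wp :: "nat \<Rightarrow> nat \<Rightarrow> (nat \<Rightarrow> nat \<Rightarrow> 'w \<Rightarrow> nat) \<Rightarrow> 'w \<Rightarrow> (nat\<Rightarrow>nat\<Rightarrow>nat)" where
  "wp N T C \<omega> = win N T (\<lambda>n k. C n k \<omega>)"

lemma countable_hist: "countable (range (win N T))"
proof -
  define r where "r f = (\<lambda>n h. if 1 \<le> n \<and> n \<le> T \<and> h < N then f (n, h) else (0::nat))" for f :: "nat \<times> nat \<Rightarrow> nat"
  have "range (win N T) \<subseteq> r ` (PiE ({1..T} \<times> {..<N}) (\<lambda>_. UNIV))"
  proof
    fix x assume "x \<in> range (win N T)"
    then obtain \<eta> where x: "x = win N T \<eta>" by auto
    have "x = r (restrict (\<lambda>p. \<eta> (fst p) (snd p)) ({1..T} \<times> {..<N}))"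
      unfolding x r_def win_def by (auto simp: fun_eq_iff)
    thus "x \<in> r ` (PiE ({1..T} \<times> {..<N}) (\<lambda>_. UNIV))" by auto
  qed
  moreover have "countable (PiE ({1..T} \<times> {..<N}) (\<lambda>_. UNIV :: nat set))"
    by (rule countable_PiE) auto
  ultimately show ?thesis by (meson countable_image countable_subset)
qed

locale im = prob_space M for M :: "'w measure" +
  fixes N :: nat and \<theta> :: "nat \<Rightarrow> real" and \<Gamma> W :: "nat \<Rightarrow> nat \<Rightarrow> real" and C :: "nat \<Rightarrow> nat \<Rightarrow> 'w \<Rightarrow> nat"
  assumes Cm: "\<And>n h. C n h \<in> measurable M (count_space UNIV)"
  and cond: "\<And>t \<eta> y. measure M {\<omega> \<in> histev M N C t \<eta>. \<forall>h<N. outcome N (\<lambda>n k. C n k \<omega>) t h = y h}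
        = measure M (histev M N C t \<eta>) * (\<Prod>h<N. stepprob N \<theta> \<Gamma> W \<eta> t h (y h))"
  and thp: "\<And>h. h < N \<Longrightarrow> \<theta> h > 0"
  and Wc: "\<And>h. h < N \<Longrightarrow> (\<Sum>j<N. W j h) = 1"
  and Gn: "\<And>j h. j < N \<Longrightarrow> h < N \<Longrightarrow> \<Gamma> j h \<ge> 0"
  and Gc: "\<And>h. h < N \<Longrightarrow> (\<Sum>j<N. \<Gamma> j h) < 1"
begin

abbreviation "H T \<eta> \<equiv> histev M N C T \<eta>"
abbreviation "R T \<equiv> range (win N T)"

lemma histev_eq: "H T \<eta> = {\<omega> \<in> space M. wp N T C \<omega> = win N T \<eta>}"
  unfolding histev_def wp_def win_def by (auto simp: fun_eq_iff)

lemma histev_sets: "H T \<eta> \<in> sets M"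
proof -
  have "H T \<eta> = {\<omega> \<in> space M. \<forall>p\<in>{1..T} \<times> {..<N}. C (fst p) (snd p) \<omega> = \<eta> (fst p) (snd p)}"
    unfolding histev_def by auto
  also have "\<dots> \<in> sets M"
  proof (rule sets.sets_Collect_finite_All)
    fix p
    have "C (fst p) (snd p) -` {\<eta> (fst p) (snd p)} \<inter> space M \<in> sets M"
      by (rule measurable_sets[OF Cm]) auto
    moreover have "C (fst p) (snd p) -` {\<eta> (fst p) (snd p)} \<inter> space M = {\<omega> \<in> space M. C (fst p) (snd p) \<omega> = \<eta> (fst p) (snd p)}"
      by auto
    ultimately show "{\<omega> \<in> space M. C (fst p) (snd p) \<omega> = \<eta> (fst p) (snd p)} \<in> sets M" by simp
  qed auto
  finally show ?thesis .
qed

lemma wp_meas: "wp N T C \<in> measurable M (count_space (R T))"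
proof (subst measurable_count_space_eq_countable[OF countable_hist], intro conjI ballI)
  show "wp N T C \<in> space M \<rightarrow> R T" unfolding wp_def by auto
  fix a assume "a \<in> R T"
  hence "win N T a = a" using win_idem by auto
  hence "wp N T C -` {a} \<inter> space M = H T a" unfolding histev_eq by auto
  thus "wp N T C -` {a} \<inter> space M \<in> sets M" using histev_sets by simp
qed

lemma wp_pred: "{\<omega> \<in> space M. P (wp N T C \<omega>)} \<in> sets M"
proof -
  have "wp N T C -` {x \<in> R T. P x} \<inter> space M \<in> sets M"
    by (rule measurable_sets[OF wp_meas]) auto
  moreover have "wp N T C -` {x \<in> R T. P x} \<inter> space M = {\<omega> \<in> space M. P (wp N T C \<omega>)}"
    unfolding wp_def by auto
  ultimately show ?thesis by simp
qed

lemma wp_fun_meas: "(\<lambda>\<omega>. f (wp N T C \<omega>)) \<in> measurable M (count_space UNIV)"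
  by (rule measurable_compose[OF wp_meas measurable_count_space])

lemma wp_borel: "(\<lambda>\<omega>. f (wp N T C \<omega>) :: real) \<in> borel_measurable M"
  by (rule measurable_compose[OF wp_meas]) simp

lemma wp_borel_enn: "(\<lambda>\<omega>. f (wp N T C \<omega>) :: ennreal) \<in> borel_measurable M"
  by (rule measurable_compose[OF wp_meas]) simp

lemma decomp:
  assumes f: "f \<in> borel_measurable M"
  shows "(\<integral>\<^sup>+\<omega>. f \<omega> \<partial>M) = (\<integral>\<^sup>+\<eta>. (\<integral>\<^sup>+\<omega>. f \<omega> * indicator (H T \<eta>) \<omega> \<partial>M) \<partial>count_space (R T))"
proof -
  have "(\<integral>\<^sup>+\<omega>. f \<omega> \<partial>M) = (\<integral>\<^sup>+\<omega>. (\<integral>\<^sup>+\<eta>. f \<omega> * indicator (H T \<eta>) \<omega> \<partial>count_space (R T)) \<partial>M)"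
  proof (rule nn_integral_cong)
    fix \<omega> assume \<omega>: "\<omega> \<in> space M"
    have wR: "wp N T C \<omega> \<in> R T" unfolding wp_def by auto
    have "(\<integral>\<^sup>+\<eta>. f \<omega> * indicator (H T \<eta>) \<omega> \<partial>count_space (R T))
        = (\<integral>\<^sup>+\<eta>. f \<omega> * indicator {wp N T C \<omega>} \<eta> \<partial>count_space (R T))"
    proof (rule nn_integral_cong)
      fix \<eta> assume "\<eta> \<in> space (count_space (R T))"
      hence "win N T \<eta> = \<eta>" using win_idem by auto
      thus "f \<omega> * indicator (H T \<eta>) \<omega> = f \<omega> * indicator {wp N T C \<omega>} \<eta>"
        using \<omega> unfolding histev_eq by (auto simp: indicator_def)
    qed
    also have "\<dots> = f \<omega> * emeasure (count_space (R T)) {wp N T C \<omega>}"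
      by (rule nn_integral_cmult_indicator) (use wR in auto)
    also have "\<dots> = f \<omega>" using wR by simp
    finally show "f \<omega> = (\<integral>\<^sup>+\<eta>. f \<omega> * indicator (H T \<eta>) \<omega> \<partial>count_space (R T))" by simp
  qed
  also have "\<dots> = (\<integral>\<^sup>+\<eta>. (\<integral>\<^sup>+\<omega>. f \<omega> * indicator (H T \<eta>) \<omega> \<partial>M) \<partial>count_space (R T))"
    by (rule nn_integral_count_space_nn_integral[OF countable_hist]) (use f histev_sets in auto)
  finally show ?thesis .
qed

end



context im begin

lemma win_R: "\<eta> \<in> R T \<Longrightarrow> win N T \<eta> = \<eta>"
  using win_idem by auto

lemma hist_bound:
  assumes j: "j < N" and eta: "\<eta> \<in> R t"
  shows "measure M ({\<omega>\<in>space M. outcome N (\<lambda>n k. C n k \<omega>) t j = None} \<inter> H t \<eta>)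
     \<le> measure M (H t \<eta>) * Zstar N \<theta> \<Gamma> \<eta> t j"
proof -
  let ?E = "{\<omega>\<in>space M. outcome N (\<lambda>n k. C n k \<omega>) t j = None}"
  define D where "D = drawn N \<eta> t"
  define Os where "Os = insert None (Some ` D)"
  define A where "A h = (if h = j then {None} else Os)" for h
  define Y where "Y = PiE {..<N} A"
  define S where "S y = {\<omega> \<in> H t \<eta>. \<forall>h<N. outcome N (\<lambda>n k. C n k \<omega>) t h = y h}" for y
  have we: "win N t \<eta> = \<eta>" using win_R[OF eta] .
  have finD: "finite D" unfolding D_def by (rule finite_drawn)
  have finOs: "finite Os" unfolding Os_def using finD by simp
  have finA: "finite (A h)" for h unfolding A_def using finOs by simp
  have finY: "finite Y" unfolding Y_def using finA by (intro finite_PiE) auto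
  have inH: "\<omega> \<in> H t \<eta> \<longleftrightarrow> \<omega> \<in> space M \<and> wp N t C \<omega> = \<eta>" for \<omega>
    unfolding histev_eq we by simp
  have sub: "?E \<inter> H t \<eta> \<subseteq> (\<Union>y\<in>Y. S y)"
  proof
    fix \<omega> assume \<omega>: "\<omega> \<in> ?E \<inter> H t \<eta>"
    define y where "y = restrict (\<lambda>h. outcome N (\<lambda>n k. C n k \<omega>) t h) {..<N}"
    have w: "wp N t C \<omega> = \<eta>" using \<omega> inH by blast
    have "drawn N (\<lambda>n k. C n k \<omega>) t = drawn N (wp N t C \<omega>) t" unfolding wp_def by (rule drawn_win[symmetric])
    hence dr: "drawn N (\<lambda>n k. C n k \<omega>) t = D" unfolding w D_def .
    have "y \<in> Y" unfolding Y_def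
    proof (rule PiE_I)
      fix h assume h: "h \<in> {..<N}"
      show "y h \<in> A h"
      proof (cases "h = j")
        case True thus ?thesis using \<omega> h unfolding y_def A_def by auto
      next
        case False thus ?thesis using h dr unfolding y_def A_def Os_def outcome_def by auto
      qed
    qed (auto simp: y_def)
    moreover have "\<omega> \<in> S y" using \<omega> unfolding S_def y_def by auto
    ultimately show "\<omega> \<in> (\<Union>y\<in>Y. S y)" by auto
  qed
  have Ssets: "S y \<in> sets M" for y
  proof -
    have "S y = {\<omega> \<in> space M. win N t (wp N (Suc t) C \<omega>) = \<eta> \<and> (\<forall>h<N. outcome N (wp N (Suc t) C \<omega>) t h = y h)}"
      unfolding S_def inH wp_def by (auto simp: win_win outcome_win)
    thus ?thesis using wp_pred by simp
  qed
  have "measure M (?E \<inter> H t \<eta>) \<le> measure M (\<Union>y\<in>Y. S y)"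
    by (rule finite_measure_mono[OF sub]) (use finY Ssets in auto)
  also have "\<dots> \<le> (\<Sum>y\<in>Y. measure M (S y))"
    by (rule finite_measure_subadditive_finite) (use finY Ssets in auto)
  also have "\<dots> = (\<Sum>y\<in>Y. measure M (H t \<eta>) * (\<Prod>h<N. stepprob N \<theta> \<Gamma> W \<eta> t h (y h)))"
    unfolding S_def by (intro sum.cong refl cond)
  also have "\<dots> = measure M (H t \<eta>) * (\<Prod>h<N. \<Sum>x\<in>A h. stepprob N \<theta> \<Gamma> W \<eta> t h x)"
    unfolding Y_def by (simp add: sum_distrib_left prod_sum_PiE finA)
  also have "(\<Prod>h<N. \<Sum>x\<in>A h. stepprob N \<theta> \<Gamma> W \<eta> t h x) = (\<Prod>h<N. if h = j then Zstar N \<theta> \<Gamma> \<eta> t j else 1)"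
  proof (rule prod.cong[OF refl])
    fix h assume h: "h \<in> {..<N}"
    show "(\<Sum>x\<in>A h. stepprob N \<theta> \<Gamma> W \<eta> t h x) = (if h = j then Zstar N \<theta> \<Gamma> \<eta> t j else 1)"
    proof (cases "h = j")
      case True thus ?thesis unfolding A_def by (simp add: stepprob_def)
    next
      case False
      have "(\<Sum>x\<in>A h. stepprob N \<theta> \<Gamma> W \<eta> t h x) = stepprob N \<theta> \<Gamma> W \<eta> t h None + (\<Sum>x\<in>Some ` D. stepprob N \<theta> \<Gamma> W \<eta> t h x)"
        unfolding A_def Os_def using False finD by (simp add: sum.insert)
      also have "(\<Sum>x\<in>Some ` D. stepprob N \<theta> \<Gamma> W \<eta> t h x) = (\<Sum>c\<in>D. Pold N \<theta> \<Gamma> W \<eta> t h c)"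
        by (subst sum.reindex) (auto simp: stepprob_def D_def intro!: sum.cong)
      also have "stepprob N \<theta> \<Gamma> W \<eta> t h None + (\<Sum>c\<in>D. Pold N \<theta> \<Gamma> W \<eta> t h c) = 1"
        unfolding D_def stepprob_def using sigma_one[of h N \<theta> W \<Gamma> \<eta> t] h thp Wc by simp
      finally show ?thesis using False by simp
    qed
  qed
  also have "\<dots> = Zstar N \<theta> \<Gamma> \<eta> t j" using j by (simp add: prod.delta)
  finally show ?thesis .
qed

end



context im begin

lemma Z_wp: "Zstar N \<theta> \<Gamma> (\<lambda>n k. C n k \<omega>) t j = Zstar N \<theta> \<Gamma> (wp N t C \<omega>) t j"
  unfolding wp_def Zstar_win ..

lemma D_wp: "Dstar N (\<lambda>n k. C n k \<omega>) t j = Dstar N (wp N t C \<omega>) t j"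
  unfolding wp_def Dstar_win ..

lemma Zmeas: "(\<lambda>\<omega>. Zstar N \<theta> \<Gamma> (\<lambda>n k. C n k \<omega>) t j) \<in> borel_measurable M"
  unfolding Z_wp by (rule wp_borel)

lemma Dmeas: "(\<lambda>\<omega>. real (Dstar N (\<lambda>n k. C n k \<omega>) t j)) \<in> borel_measurable M"
  unfolding D_wp by (rule wp_borel)

lemma Zb: "j < N \<Longrightarrow> 0 \<le> Zstar N \<theta> \<Gamma> \<eta> t j \<and> Zstar N \<theta> \<Gamma> \<eta> t j \<le> 1"
  using Zstar_bounds[of j N \<theta> \<Gamma> \<eta> t] thp Gn Gc by auto

lemma Zint: "j < N \<Longrightarrow> integrable M (\<lambda>\<omega>. Zstar N \<theta> \<Gamma> (\<lambda>n k. C n k \<omega>) t j)"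
  by (rule integrable_const_bound[where B=1]) (use Zb Zmeas in auto)

lemma Dint: "integrable M (\<lambda>\<omega>. real (Dstar N (\<lambda>n k. C n k \<omega>) t j))"
  by (rule integrable_const_bound[where B="real t"]) (use Dstar_le Dmeas in auto)

lemma Eset_sets: "j < N \<Longrightarrow> {\<omega>\<in>space M. outcome N (\<lambda>n k. C n k \<omega>) t j = None} \<in> sets M"
proof -
  assume j: "j < N"
  have "{\<omega>\<in>space M. outcome N (\<lambda>n k. C n k \<omega>) t j = None} = {\<omega>\<in>space M. outcome N (wp N (Suc t) C \<omega>) t j = None}"
    unfolding wp_def using j by (simp add: outcome_win)
  thus ?thesis using wp_pred by simp
qed

lemma prob_new:
  assumes j: "j < N"
  shows "measure M {\<omega>\<in>space M. outcome N (\<lambda>n k. C n k \<omega>) t j = None} \<le> (\<integral>\<omega>. Zstar N \<theta> \<Gamma> (\<lambda>n k. C n k \<omega>) t j \<partial>M)"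
proof -
  define E where "E = {\<omega>\<in>space M. outcome N (\<lambda>n k. C n k \<omega>) t j = None}"
  define Z where "Z \<omega> = Zstar N \<theta> \<Gamma> (\<lambda>n k. C n k \<omega>) t j" for \<omega>
  have Es: "E \<in> sets M" unfolding E_def using Eset_sets[OF j] .
  have Zm: "(\<lambda>\<omega>. ennreal (Z \<omega>)) \<in> borel_measurable M" unfolding Z_def using Zmeas by simp
  have "emeasure M E = (\<integral>\<^sup>+\<omega>. indicator E \<omega> \<partial>M)" using Es by simp
  also have "\<dots> = (\<integral>\<^sup>+\<eta>. (\<integral>\<^sup>+\<omega>. indicator E \<omega> * indicator (H t \<eta>) \<omega> \<partial>M) \<partial>count_space (R t))"
    by (rule decomp) (use Es in simp)
  also have "\<dots> \<le> (\<integral>\<^sup>+\<eta>. (\<integral>\<^sup>+\<omega>. ennreal (Z \<omega>) * indicator (H t \<eta>) \<omega> \<partial>M) \<partial>count_space (R t))"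
  proof (rule nn_integral_mono)
    fix \<eta> assume "\<eta> \<in> space (count_space (R t))"
    hence eta: "\<eta> \<in> R t" by simp
    have we: "win N t \<eta> = \<eta>" using win_R[OF eta] .
    have "(\<integral>\<^sup>+\<omega>. indicator E \<omega> * indicator (H t \<eta>) \<omega> \<partial>M) = (\<integral>\<^sup>+\<omega>. indicator (E \<inter> H t \<eta>) \<omega> \<partial>M)"
      by (rule nn_integral_cong) (simp add: indicator_inter_arith)
    also have "\<dots> = emeasure M (E \<inter> H t \<eta>)" using Es histev_sets by simp
    also have "\<dots> = ennreal (measure M (E \<inter> H t \<eta>))" by (simp add: emeasure_eq_measure)
    also have "\<dots> \<le> ennreal (measure M (H t \<eta>) * Zstar N \<theta> \<Gamma> \<eta> t j)"
      using hist_bound[OF j eta] unfolding E_def by (rule ennreal_leI)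
    also have "\<dots> = ennreal (Zstar N \<theta> \<Gamma> \<eta> t j) * emeasure M (H t \<eta>)"
      using Zb[OF j] by (simp add: emeasure_eq_measure ennreal_mult mult.commute)
    also have "\<dots> = (\<integral>\<^sup>+\<omega>. ennreal (Zstar N \<theta> \<Gamma> \<eta> t j) * indicator (H t \<eta>) \<omega> \<partial>M)"
      using histev_sets by (simp add: nn_integral_cmult_indicator)
    also have "\<dots> = (\<integral>\<^sup>+\<omega>. ennreal (Z \<omega>) * indicator (H t \<eta>) \<omega> \<partial>M)"
    proof (rule nn_integral_cong)
      fix \<omega> assume "\<omega> \<in> space M"
      show "ennreal (Zstar N \<theta> \<Gamma> \<eta> t j) * indicator (H t \<eta>) \<omega> = ennreal (Z \<omega>) * indicator (H t \<eta>) \<omega>"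
      proof (cases "\<omega> \<in> H t \<eta>")
        case True
        hence "wp N t C \<omega> = \<eta>" unfolding histev_eq we by simp
        hence "Z \<omega> = Zstar N \<theta> \<Gamma> \<eta> t j" unfolding Z_def Z_wp by simp
        thus ?thesis by simp
      qed simp
    qed
    finally show "(\<integral>\<^sup>+\<omega>. indicator E \<omega> * indicator (H t \<eta>) \<omega> \<partial>M) \<le> (\<integral>\<^sup>+\<omega>. ennreal (Z \<omega>) * indicator (H t \<eta>) \<omega> \<partial>M)" .
  qed
  also have "\<dots> = (\<integral>\<^sup>+\<omega>. ennreal (Z \<omega>) \<partial>M)"
    by (rule decomp[symmetric]) (rule Zm)
  also have "\<dots> = ennreal (\<integral>\<omega>. Z \<omega> \<partial>M)"
    by (rule nn_integral_eq_integral) (use Zint[OF j] Zb[OF j] in \<open>auto simp: Z_def\<close>)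
  finally have "ennreal (measure M E) \<le> ennreal (\<integral>\<omega>. Z \<omega> \<partial>M)" by (simp add: emeasure_eq_measure)
  moreover have "0 \<le> (\<integral>\<omega>. Z \<omega> \<partial>M)" using Zb[OF j] unfolding Z_def by (intro integral_nonneg_AE) auto
  ultimately show ?thesis unfolding E_def Z_def by (simp add: ennreal_le_iff)
qed

lemma D_rec:
  assumes j: "j < N"
  shows "(\<integral>\<omega>. real (Dstar N (\<lambda>n k. C n k \<omega>) (Suc t) j) \<partial>M)
     \<le> (\<integral>\<omega>. real (Dstar N (\<lambda>n k. C n k \<omega>) t j) \<partial>M) + (\<integral>\<omega>. Zstar N \<theta> \<Gamma> (\<lambda>n k. C n k \<omega>) t j \<partial>M)"
proof -
  define E where "E = {\<omega>\<in>space M. outcome N (\<lambda>n k. C n k \<omega>) t j = None}"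
  have Es: "E \<in> sets M" unfolding E_def using Eset_sets[OF j] .
  have Ei: "integrable M (indicator E :: 'w \<Rightarrow> real)"
    by (rule integrable_const_bound[where B=1]) (use Es in auto)
  have "(\<integral>\<omega>. real (Dstar N (\<lambda>n k. C n k \<omega>) (Suc t) j) \<partial>M)
      \<le> (\<integral>\<omega>. real (Dstar N (\<lambda>n k. C n k \<omega>) t j) + indicator E \<omega> \<partial>M)"
  proof (rule integral_mono[OF Dint])
    show "integrable M (\<lambda>\<omega>. real (Dstar N (\<lambda>n k. C n k \<omega>) t j) + indicator E \<omega>)"
      using Dint Ei by (rule Bochner_Integration.integrable_add)
    fix \<omega> assume \<omega>: "\<omega> \<in> space M"
    have "Dstar N (\<lambda>n k. C n k \<omega>) (Suc t) j \<le> Dstar N (\<lambda>n k. C n k \<omega>) t j + (if outcome N (\<lambda>n k. C n k \<omega>) t j = None then 1 else 0)"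
      by (rule Dstar_Suc)
    thus "real (Dstar N (\<lambda>n k. C n k \<omega>) (Suc t) j) \<le> real (Dstar N (\<lambda>n k. C n k \<omega>) t j) + indicator E \<omega>"
      using \<omega> unfolding E_def by (auto split: if_splits)
  qed
  also have "\<dots> = (\<integral>\<omega>. real (Dstar N (\<lambda>n k. C n k \<omega>) t j) \<partial>M) + measure M E"
    using Dint Ei Es by (simp add: Bochner_Integration.integral_add)
  also have "measure M E \<le> (\<integral>\<omega>. Zstar N \<theta> \<Gamma> (\<lambda>n k. C n k \<omega>) t j \<partial>M)"
    unfolding E_def by (rule prob_new[OF j])
  finally show ?thesis by simp
qed

lemma Z_int_eq:
  assumes j: "j < N"
  shows "(\<integral>\<omega>. Zstar N \<theta> \<Gamma> (\<lambda>n k. C n k \<omega>) t j \<partial>M)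
     = (\<theta> j + (\<Sum>i<N. \<Gamma> i j * (\<integral>\<omega>. real (Dstar N (\<lambda>n k. C n k \<omega>) t i) \<partial>M))) / (\<theta> j + real t)"
proof -
  have "(\<integral>\<omega>. Zstar N \<theta> \<Gamma> (\<lambda>n k. C n k \<omega>) t j \<partial>M)
      = (\<integral>\<omega>. (\<theta> j + (\<Sum>i<N. \<Gamma> i j * real (Dstar N (\<lambda>n k. C n k \<omega>) t i))) \<partial>M) / (\<theta> j + real t)"
    unfolding Zstar_def by simp
  also have "(\<integral>\<omega>. (\<theta> j + (\<Sum>i<N. \<Gamma> i j * real (Dstar N (\<lambda>n k. C n k \<omega>) t i))) \<partial>M)
      = \<theta> j + (\<Sum>i<N. \<Gamma> i j * (\<integral>\<omega>. real (Dstar N (\<lambda>n k. C n k \<omega>) t i) \<partial>M))"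
    using Dint by (simp add: Bochner_Integration.integral_add Bochner_Integration.integral_sum prob_space)
  finally show ?thesis .
qed

end



lemma ln_step: "real t \<ge> 1 \<Longrightarrow> 1 / (real t + 1) \<le> ln (real t + 1) - ln (real t)"
proof -
  assume t: "real t \<ge> 1"
  have "ln (real t / (real t + 1)) \<le> real t / (real t + 1) - 1" using t by (intro ln_le_minus_one) auto
  also have "\<dots> = - 1 / (real t + 1)" using t by (simp add: field_simps)
  finally have "ln (real t) - ln (real t + 1) \<le> - 1 / (real t + 1)" using t by (simp add: ln_div)
  thus ?thesis by simp
qed

lemma zeta_Suc: "zeta g (Suc t) = zeta g t * inverse (1 - (1 - g) / real (Suc t))"
  unfolding zeta_def by (subst prod.nat_ivl_Suc') (auto simp: mult.commute)

lemma zeta_bound: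
  assumes g: "0 < g" "g < 1" and t: "t \<ge> 1"
  shows "zeta g t \<le> (1/g) * exp ((1-g) * ln (real t) + 2 - 2 / real t)"
  using t
proof (induction t rule: dec_induct)
  case base
  show ?case by (simp add: zeta_def inverse_eq_divide)
next
  case (step t)
  define x where "x = (1-g) / real (Suc t)"
  have t1: "real t \<ge> 1" using step by simp
  have x0: "0 \<le> x" and xh: "x \<le> 1/2" unfolding x_def using g t1 by (auto simp: field_simps)
  have "- x - 2 * x\<^sup>2 \<le> ln (1 - x)" by (rule ln_one_minus_pos_lower_bound[OF x0 xh])
  moreover have xp: "0 < 1 - x" using xh by simp
  ultimately have "exp (- x - 2 * x\<^sup>2) \<le> exp (ln (1 - x))" by (simp only: exp_le_cancel_iff)
  hence "exp (- x - 2 * x\<^sup>2) \<le> 1 - x" using xp by simp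
  hence "inverse (1 - x) \<le> inverse (exp (- x - 2 * x\<^sup>2))" by (rule le_imp_inverse_le) simp
  moreover have "exp (- x - 2 * x\<^sup>2) * exp (x + 2 * x\<^sup>2) = 1" by (simp add: exp_add[symmetric])
  hence "inverse (exp (- x - 2 * x\<^sup>2)) = exp (x + 2 * x\<^sup>2)" by (rule inverse_unique)
  ultimately have inv: "inverse (1 - x) \<le> exp (x + 2 * x\<^sup>2)" by simp
  have z0: "zeta g t \<ge> 0" unfolding zeta_def
  proof (intro prod_nonneg)
    fix k assume k: "k \<in> {1..t}"
    have "(1 - g) / real k \<le> (1 - g) / 1" using g k by (intro divide_left_mono) auto
    hence "0 \<le> 1 - (1 - g) / real k" using g by simp
    thus "0 \<le> inverse (1 - (1 - g) / real k)" by simp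
  qed
  have "zeta g (Suc t) = zeta g t * inverse (1 - x)" unfolding zeta_Suc x_def ..
  also have "\<dots> \<le> (1/g) * exp ((1-g) * ln (real t) + 2 - 2 / real t) * exp (x + 2 * x\<^sup>2)"
    using step.IH z0 inv xh by (intro mult_mono) auto
  also have "\<dots> = (1/g) * exp ((1-g) * ln (real t) + 2 - 2 / real t + x + 2 * x\<^sup>2)"
    by (simp add: exp_add[symmetric] add.assoc)
  also have "\<dots> \<le> (1/g) * exp ((1-g) * ln (real (Suc t)) + 2 - 2 / real (Suc t))"
  proof -
    have a: "x \<le> (1 - g) * (ln (real t + 1) - ln (real t))"
      unfolding x_def using ln_step[OF t1] g by (simp add: divide_simps mult_left_mono add.commute)
    have g2: "(1-g)^2 \<le> 1" using g by (simp add: power_le_one)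
    have "2 * x\<^sup>2 = 2 * (1-g)^2 / (real t + 1)^2" unfolding x_def by (simp add: power_divide add.commute)
    also have "\<dots> \<le> 2 * 1 / (real t + 1)^2" using g2 by (intro divide_right_mono mult_left_mono) auto
    finally have "2 * x\<^sup>2 \<le> 2 / (real t + 1)^2" by simp
    also have "\<dots> \<le> 2 / (real t * (real t + 1))"
      by (rule divide_left_mono) (use t1 in \<open>auto simp: power2_eq_square intro: mult_right_mono\<close>)
    also have "\<dots> = 2 / real t - 2 / (real t + 1)" using t1 by (simp add: field_simps)
    finally have b: "2 * x\<^sup>2 \<le> 2 / real t - 2 / (real t + 1)" .
    have "(1-g) * ln (real t) + 2 - 2 / real t + x + 2 * x\<^sup>2 \<le> (1-g) * ln (real (Suc t)) + 2 - 2 / real (Suc t)"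
      using a b by (simp add: algebra_simps)
    hence "exp ((1-g) * ln (real t) + 2 - 2 / real t + x + 2 * x\<^sup>2) \<le> exp ((1-g) * ln (real (Suc t)) + 2 - 2 / real (Suc t))"
      by (simp only: exp_le_cancel_iff)
    thus ?thesis using g by (intro mult_left_mono) auto
  qed
  finally show ?case .
qed

lemma q_bound:
  fixes q :: "nat \<Rightarrow> real"
  assumes c: "c \<ge> 0" and q0: "\<And>t. t \<ge> 1 \<Longrightarrow> 0 \<le> q t"
    and qs: "\<And>t. t \<ge> 1 \<Longrightarrow> q (Suc t) \<le> q t * (1 + c / real t)" and t: "t \<ge> 1"
  shows "q t \<le> q 1 * exp (c * ln (real t) + c - c / real t)"
  using t
proof (induction t rule: dec_induct)
  case base thus ?case by simp
next
  case (step t)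
  have t1: "real t \<ge> 1" using step by simp
  have "q (Suc t) \<le> q t * (1 + c / real t)" using qs step by simp
  also have "\<dots> \<le> q 1 * exp (c * ln (real t) + c - c / real t) * exp (c / real t)"
    using step.IH q0[of t] step c t1 by (intro mult_mono) auto
  also have "\<dots> = q 1 * exp (c * ln (real t) + c)"
    by (simp add: exp_add[symmetric])
  also have "\<dots> \<le> q 1 * exp (c * ln (real (Suc t)) + c - c / real (Suc t))"
  proof -
    have "c / (real t + 1) \<le> c * (ln (real t + 1) - ln (real t))"
      using ln_step[OF t1] c by (metis divide_inverse inverse_eq_divide mult_left_mono)
    hence "c * ln (real t) + c \<le> c * ln (real (Suc t)) + c - c / real (Suc t)" by (simp add: algebra_simps)
    thus ?thesis using q0[of 1] by (intro mult_left_mono) auto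
  qed
  finally show ?case .
qed




context im begin

lemma V_facts:
  "0 \<le> Vstar N \<theta> \<Gamma> C t \<omega>"
  "Vstar N \<theta> \<Gamma> C t \<omega> \<le> (\<Sum>j<N. Zstar N \<theta> \<Gamma> (\<lambda>n k. C n k \<omega>) t j)"
  "Vstar N \<theta> \<Gamma> C t \<omega> \<le> real N"
proof -
  have b: "0 \<le> Zstar N \<theta> \<Gamma> (\<lambda>n k. C n k \<omega>) t j \<and> Zstar N \<theta> \<Gamma> (\<lambda>n k. C n k \<omega>) t j \<le> 1" if "j < N" for j
    using Zb[OF that] .
  show "0 \<le> Vstar N \<theta> \<Gamma> C t \<omega>" unfolding Vstar_def using b by (intro sum_nonneg) auto
  show "Vstar N \<theta> \<Gamma> C t \<omega> \<le> (\<Sum>j<N. Zstar N \<theta> \<Gamma> (\<lambda>n k. C n k \<omega>) t j)"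
    unfolding Vstar_def using b by (intro sum_mono) (auto simp: mult_left_le)
  have "Vstar N \<theta> \<Gamma> C t \<omega> \<le> (\<Sum>j<N. 1)"
    unfolding Vstar_def using b by (intro sum_mono) (auto simp: mult_le_one)
  thus "Vstar N \<theta> \<Gamma> C t \<omega> \<le> real N" by simp
qed

lemma Vmeas: "Vstar N \<theta> \<Gamma> C t \<in> borel_measurable M"
proof -
  have "Vstar N \<theta> \<Gamma> C t = (\<lambda>\<omega>. \<Sum>j<N. Zstar N \<theta> \<Gamma> (\<lambda>n k. C n k \<omega>) t j * (1 - Zstar N \<theta> \<Gamma> (\<lambda>n k. C n k \<omega>) t j))"
    unfolding Vstar_def by (rule ext) simp
  also have "\<dots> \<in> borel_measurable M" using Zmeas by measurable
  finally show ?thesis .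
qed

lemma Vint: "integrable M (Vstar N \<theta> \<Gamma> C t)"
  by (rule integrable_const_bound[where B="real N"]) (use V_facts Vmeas in auto)

lemma EV_bound: "(\<integral>\<omega>. Vstar N \<theta> \<Gamma> C t \<omega> \<partial>M) \<le> (\<Sum>j<N. (\<integral>\<omega>. Zstar N \<theta> \<Gamma> (\<lambda>n k. C n k \<omega>) t j \<partial>M))"
proof -
  have "(\<integral>\<omega>. Vstar N \<theta> \<Gamma> C t \<omega> \<partial>M) \<le> (\<integral>\<omega>. (\<Sum>j<N. Zstar N \<theta> \<Gamma> (\<lambda>n k. C n k \<omega>) t j) \<partial>M)"
    by (rule integral_mono[OF Vint]) (use Zint V_facts in auto)
  also have "\<dots> = (\<Sum>j<N. (\<integral>\<omega>. Zstar N \<theta> \<Gamma> (\<lambda>n k. C n k \<omega>) t j \<partial>M))"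
    by (rule Bochner_Integration.integral_sum) (use Zint in auto)
  finally show ?thesis .
qed

lemma final:
  fixes u :: "nat \<Rightarrow> real"
  assumes g: "0 < g" "g < 1" and c2: "0 < \<gamma>2" "\<gamma>2 < 2 * g"
    and u1: "\<forall>i<N. u i \<ge> 1" and uG: "\<forall>i<N. (\<Sum>j<N. \<Gamma> i j * u j) \<le> \<gamma>2 * u i"
  shows "summable (\<lambda>t. (zeta g (Suc t))\<^sup>2 / (real (Suc t))\<^sup>2 * integral\<^sup>L M (Vstar N \<theta> \<Gamma> C t))
     \<and> (AE \<omega> in M. summable (\<lambda>t. (zeta g (Suc t))\<^sup>2 / (real (Suc t))\<^sup>2 * Vstar N \<theta> \<Gamma> C t \<omega>))"
proof -
  define a where "a t i = (\<integral>\<omega>. real (Dstar N (\<lambda>n k. C n k \<omega>) t i) \<partial>M)" for t i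
  define s where "s t = (\<Sum>j<N. u j * a t j)" for t
  define B where "B = (\<Sum>j<N. u j * \<theta> j)"
  define q where "q t = s t + B / \<gamma>2" for t
  have a_nn: "0 \<le> a t i" for t i unfolding a_def by (intro integral_nonneg_AE) auto
  have a0: "a 0 i = 0" for i unfolding a_def by (simp add: Dstar_0)
  have u0: "0 \<le> u i" if "i < N" for i using u1 that by force
  have th0: "0 \<le> \<theta> i" if "i < N" for i using thp[OF that] by simp
  have B0: "0 \<le> B" unfolding B_def using u0 th0 by (intro sum_nonneg mult_nonneg_nonneg) auto
  have s0: "0 \<le> s t" for t unfolding s_def using u0 a_nn by (intro sum_nonneg) auto
  have q0: "0 \<le> q t" for t unfolding q_def using s0 B0 c2 by simp
  define num where "num t j = \<theta> j + (\<Sum>i<N. \<Gamma> i j * a t i)" for t j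
  have num0: "0 \<le> num t j" if "j < N" for t j
    unfolding num_def using that thp[of j] Gn a_nn by (intro add_nonneg_nonneg sum_nonneg mult_nonneg_nonneg) auto
  have EZ: "(\<integral>\<omega>. Zstar N \<theta> \<Gamma> (\<lambda>n k. C n k \<omega>) t j \<partial>M) = num t j / (\<theta> j + real t)" if "j < N" for t j
    unfolding num_def a_def using Z_int_eq[OF that] .
  have arec: "a (Suc t) j \<le> a t j + num t j / (\<theta> j + real t)" if "j < N" for t j
    using D_rec[OF that, of t] EZ[OF that, of t] unfolding a_def by simp
  have srec: "s (Suc t) \<le> s t + (B + \<gamma>2 * s t) / real t" if t: "t \<ge> 1" for t
  proof -
    have "s (Suc t) \<le> (\<Sum>j<N. u j * (a t j + num t j / real t))"
      unfolding s_def
    proof (intro sum_mono mult_left_mono)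
      fix j assume j: "j \<in> {..<N}"
      have "num t j / (\<theta> j + real t) \<le> num t j / real t"
        using num0[of j t] j thp[of j] t by (intro divide_left_mono) auto
      thus "a (Suc t) j \<le> a t j + num t j / real t" using arec[of j t] j by simp
    qed (use u0 in auto)
    also have "\<dots> = s t + (\<Sum>j<N. u j * num t j) / real t"
      unfolding s_def by (simp add: algebra_simps sum.distrib sum_divide_distrib)
    also have "(\<Sum>j<N. u j * num t j) = B + (\<Sum>i<N. a t i * (\<Sum>j<N. \<Gamma> i j * u j))"
      unfolding num_def B_def
      by (simp add: algebra_simps sum.distrib sum_distrib_left sum_distrib_right) (subst sum.swap, simp add: mult_ac)
    also have "(\<Sum>i<N. a t i * (\<Sum>j<N. \<Gamma> i j * u j)) \<le> (\<Sum>i<N. a t i * (\<gamma>2 * u i))"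
      using uG a_nn by (intro sum_mono mult_left_mono) auto
    also have "\<dots> = \<gamma>2 * s t" unfolding s_def by (simp add: sum_distrib_left mult_ac)
    finally show ?thesis using t by (simp add: divide_right_mono)
  qed
  have qrec: "q (Suc t) \<le> q t * (1 + \<gamma>2 / real t)" if t: "t \<ge> 1" for t
  proof -
    have "q (Suc t) \<le> s t + (B + \<gamma>2 * s t) / real t + B / \<gamma>2" unfolding q_def using srec[OF t] by simp
    also have "\<dots> = q t * (1 + \<gamma>2 / real t)" unfolding q_def using t c2 by (simp add: field_simps)
    finally show ?thesis .
  qed
  define K1 where "K1 = q 1 * exp \<gamma>2"
  have abound: "a t i \<le> K1 * exp (\<gamma>2 * ln (real t))" if t: "t \<ge> 1" and i: "i < N" for t i
  proof -
    have "a t i \<le> u i * a t i" using u1 i a_nn[of t i] by (simp add: mult_le_cancel_right1)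
    also have "\<dots> \<le> s t" unfolding s_def using i u0 a_nn by (intro member_le_sum) auto
    also have "\<dots> \<le> q t" unfolding q_def using B0 c2 by simp
    also have "\<dots> \<le> q 1 * exp (\<gamma>2 * ln (real t) + \<gamma>2 - \<gamma>2 / real t)"
      by (rule q_bound[OF _ _ qrec t]) (use c2 q0 in auto)
    also have "\<dots> \<le> q 1 * exp (\<gamma>2 * ln (real t) + \<gamma>2)"
      using q0[of 1] c2 t by (intro mult_left_mono) auto
    also have "\<dots> = K1 * exp (\<gamma>2 * ln (real t))" unfolding K1_def by (simp add: exp_add)
    finally show ?thesis .
  qed
  have K1_0: "0 \<le> K1" unfolding K1_def using q0 by simp
  define Th where "Th = (\<Sum>j<N. \<theta> j)"
  define K2 where "K2 = Th + K1"
  have EZb: "(\<integral>\<omega>. Zstar N \<theta> \<Gamma> (\<lambda>n k. C n k \<omega>) t j \<partial>M) \<le> K2 * exp ((\<gamma>2 - 1) * ln (real t))"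
    if t: "t \<ge> 1" and j: "j < N" for t j
  proof -
    define E where "E = exp (\<gamma>2 * ln (real t))"
    have E1: "1 \<le> E" unfolding E_def using t c2 by simp
    have n1: "num t j \<le> \<theta> j + (\<Sum>i<N. \<Gamma> i j * (K1 * E))"
      unfolding num_def E_def using abound t Gn j by (intro add_left_mono sum_mono mult_left_mono) auto
    have n2: "(\<Sum>i<N. \<Gamma> i j * (K1 * E)) = (\<Sum>i<N. \<Gamma> i j) * (K1 * E)" by (simp add: sum_distrib_right)
    have n3: "(\<Sum>i<N. \<Gamma> i j) * (K1 * E) \<le> 1 * (K1 * E)" using Gc[OF j] K1_0 E1 by (intro mult_right_mono) auto
    have n4: "\<theta> j \<le> Th" unfolding Th_def using j th0 by (intro member_le_sum) auto
    have Th0: "0 \<le> Th" unfolding Th_def using th0 by (intro sum_nonneg) auto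
    have n5: "Th * 1 \<le> Th * E" using Th0 E1 by (intro mult_left_mono) auto
    have "num t j \<le> Th * E + K1 * E" using n1 n2 n3 n4 n5 by linarith
    hence n: "num t j \<le> K2 * E" unfolding K2_def by (simp add: algebra_simps)
    have "num t j / (\<theta> j + real t) \<le> num t j / real t"
      using num0[of j t] j thp[of j] t by (intro divide_left_mono) auto
    also have "\<dots> \<le> K2 * E / real t" using n t by (intro divide_right_mono) auto
    also have "\<dots> = K2 * exp ((\<gamma>2 - 1) * ln (real t))"
      unfolding E_def using t by (simp add: algebra_simps exp_diff)
    finally show ?thesis using EZ[OF j] by simp
  qed
  have EVb: "integral\<^sup>L M (Vstar N \<theta> \<Gamma> C t) \<le> real N * K2 * exp ((\<gamma>2 - 1) * ln (real t))" if t: "t \<ge> 1" for t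
  proof -
    have "integral\<^sup>L M (Vstar N \<theta> \<Gamma> C t) \<le> (\<Sum>j<N. K2 * exp ((\<gamma>2 - 1) * ln (real t)))"
      using EV_bound[of t] EZb[OF t] by (meson lessThan_iff order_trans sum_mono)
    thus ?thesis by simp
  qed
  have EV0: "0 \<le> integral\<^sup>L M (Vstar N \<theta> \<Gamma> C t)" for t using V_facts by (intro integral_nonneg_AE) auto
  define K3 where "K3 = exp 2 / g"
  have zb: "zeta g (Suc t) / real (Suc t) \<le> K3 * exp (- g * ln (real t))" if t: "t \<ge> 1" for t
  proof -
    have "zeta g (Suc t) \<le> (1/g) * exp ((1-g) * ln (real (Suc t)) + 2 - 2 / real (Suc t))"
      by (rule zeta_bound) (use g in auto)
    also have "\<dots> \<le> (1/g) * exp ((1-g) * ln (real (Suc t)) + 2)" using g by (intro mult_left_mono) auto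
    finally have "zeta g (Suc t) / real (Suc t) \<le> (1/g) * exp ((1-g) * ln (real (Suc t)) + 2) / real (Suc t)"
      by (intro divide_right_mono) auto
    also have "\<dots> = K3 * exp (- g * ln (real (Suc t)))"
    proof -
      define L where "L = ln (real (Suc t))"
      have "exp ((1-g) * L + 2) = exp (L + 2 + (- g * L))" by (simp add: algebra_simps)
      also have "\<dots> = exp L * exp 2 * exp (- g * L)" by (simp only: exp_add)
      also have "exp L = real (Suc t)" unfolding L_def by simp
      finally have e: "exp ((1-g) * L + 2) = real (Suc t) * exp 2 * exp (- g * L)" .
      show ?thesis unfolding K3_def L_def[symmetric] e by simp
    qed
    also have "\<dots> \<le> K3 * exp (- g * ln (real t))"
      unfolding K3_def using g t by (intro mult_left_mono) auto
    finally show ?thesis .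
  qed
  have z0: "0 \<le> zeta g t" for t unfolding zeta_def
  proof (intro prod_nonneg)
    fix k assume k: "k \<in> {1..t}"
    have "(1 - g) / real k \<le> (1 - g) / 1" using g k by (intro divide_left_mono) auto
    hence "0 \<le> 1 - (1 - g) / real k" using g by simp
    thus "0 \<le> inverse (1 - (1 - g) / real k)" by simp
  qed
  define c where "c t = (zeta g (Suc t))\<^sup>2 / (real (Suc t))\<^sup>2" for t
  have c0: "0 \<le> c t" for t unfolding c_def by simp
  define K where "K = K3\<^sup>2 * (real N * K2)"
  have sumE: "summable (\<lambda>t. c t * integral\<^sup>L M (Vstar N \<theta> \<Gamma> C t))"
  proof (rule summable_comparison_test')
    show "summable (\<lambda>t. K * real t powr (\<gamma>2 - 1 - 2 * g))"
      using c2 by (intro summable_mult) (simp add: summable_real_powr_iff)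
    fix t :: nat assume t: "t \<ge> 1"
    have ct: "c t = (zeta g (Suc t) / real (Suc t))\<^sup>2" unfolding c_def by (simp add: power_divide)
    have zz: "0 \<le> zeta g (Suc t) / real (Suc t)" using z0 by simp
    have "c t \<le> (K3 * exp (- g * ln (real t)))\<^sup>2" unfolding ct using zb[OF t] zz by (intro power_mono) auto
    hence "c t * integral\<^sup>L M (Vstar N \<theta> \<Gamma> C t) \<le> (K3 * exp (- g * ln (real t)))\<^sup>2 * (real N * K2 * exp ((\<gamma>2 - 1) * ln (real t)))"
      using EVb[OF t] EV0 c0 by (intro mult_mono) auto
    also have "\<dots> = K * exp ((\<gamma>2 - 1 - 2 * g) * ln (real t))"
      unfolding K_def by (simp add: power2_eq_square exp_add[symmetric] algebra_simps)
    also have "\<dots> = K * real t powr (\<gamma>2 - 1 - 2 * g)" using t by (simp add: powr_def)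
    finally show "norm (c t * integral\<^sup>L M (Vstar N \<theta> \<Gamma> C t)) \<le> K * real t powr (\<gamma>2 - 1 - 2 * g)"
      using c0 EV0 by simp
  qed
  have fm: "(\<lambda>\<omega>. ennreal (c t * Vstar N \<theta> \<Gamma> C t \<omega>)) \<in> borel_measurable M" for t
    using Vmeas by measurable
  have "(\<integral>\<^sup>+\<omega>. (\<Sum>t. ennreal (c t * Vstar N \<theta> \<Gamma> C t \<omega>)) \<partial>M) = (\<Sum>t. (\<integral>\<^sup>+\<omega>. ennreal (c t * Vstar N \<theta> \<Gamma> C t \<omega>) \<partial>M))"
    by (rule nn_integral_suminf[OF fm])
  also have "\<dots> = (\<Sum>t. ennreal (c t * integral\<^sup>L M (Vstar N \<theta> \<Gamma> C t)))"
  proof (rule arg_cong[where f=suminf], rule ext)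
    fix t
    have "(\<integral>\<^sup>+\<omega>. ennreal (c t * Vstar N \<theta> \<Gamma> C t \<omega>) \<partial>M) = ennreal (\<integral>\<omega>. c t * Vstar N \<theta> \<Gamma> C t \<omega> \<partial>M)"
      by (rule nn_integral_eq_integral) (use Vint c0 V_facts in auto)
    thus "(\<integral>\<^sup>+\<omega>. ennreal (c t * Vstar N \<theta> \<Gamma> C t \<omega>) \<partial>M) = ennreal (c t * integral\<^sup>L M (Vstar N \<theta> \<Gamma> C t))"
      by simp
  qed
  also have "\<dots> = ennreal (\<Sum>t. c t * integral\<^sup>L M (Vstar N \<theta> \<Gamma> C t))"
    by (rule suminf_ennreal2) (use c0 EV0 sumE in auto)
  finally have fin: "(\<integral>\<^sup>+\<omega>. (\<Sum>t. ennreal (c t * Vstar N \<theta> \<Gamma> C t \<omega>)) \<partial>M) \<noteq> \<infinity>" by simp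
  have "AE \<omega> in M. (\<Sum>t. ennreal (c t * Vstar N \<theta> \<Gamma> C t \<omega>)) \<noteq> \<infinity>"
    by (rule nn_integral_PInf_AE[OF _ fin]) (use fm in measurable)
  hence "AE \<omega> in M. summable (\<lambda>t. c t * Vstar N \<theta> \<Gamma> C t \<omega>)"
  proof (rule AE_mp, intro AE_I2 impI)
    fix \<omega> assume "(\<Sum>t. ennreal (c t * Vstar N \<theta> \<Gamma> C t \<omega>)) \<noteq> \<infinity>"
    thus "summable (\<lambda>t. c t * Vstar N \<theta> \<Gamma> C t \<omega>)"
      by (intro summable_suminf_not_top) (use c0 V_facts in auto)
  qed
  with sumE show ?thesis unfolding c_def by simp
qed

end

theorem mainTheorem5:
  fixes M :: "'w measure" and N :: nat and \<theta> :: "nat \<Rightarrow> real"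
    and \<Gamma> \<Lambda> W :: "nat \<Rightarrow> nat \<Rightarrow> real" and C :: "nat \<Rightarrow> nat \<Rightarrow> 'w \<Rightarrow> nat"
  assumes N: "N \<ge> 1"
    and theta_pos: "\<forall>h<N. \<theta> h > 0"
    and Gamma_nonneg: "\<forall>j<N. \<forall>h<N. \<Gamma> j h \<ge> 0"
    and Lambda_nonneg: "\<forall>j<N. \<forall>h<N. \<Lambda> j h \<ge> 0"
    and W_def: "\<forall>j<N. \<forall>h<N. W j h = \<Gamma> j h + \<Lambda> j h"
    and W_cols: "\<forall>h<N. (\<Sum>j<N. W j h) = 1"
    and Gamma_cols: "\<forall>h<N. (\<Sum>j<N. \<Gamma> j h) < 1"
    and Lambda_diag: "\<forall>h<N. \<Lambda> h h > 0"
    and model: "innovation_model M N \<theta> \<Gamma> W C"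
    and irred: "irreducible_mat N \<Gamma>"
    and gstar: "0 < pf_eigenvalue N \<Gamma>" "pf_eigenvalue N \<Gamma> < 1"
  shows "summable (\<lambda>t. (zeta (pf_eigenvalue N \<Gamma>) (Suc t))\<^sup>2 / (real (Suc t))\<^sup>2
                        * integral\<^sup>L M (Vstar N \<theta> \<Gamma> C t))
     \<and> (AE \<omega> in M. summable (\<lambda>t. (zeta (pf_eigenvalue N \<Gamma>) (Suc t))\<^sup>2 / (real (Suc t))\<^sup>2
                        * Vstar N \<theta> \<Gamma> C t \<omega>))"
  proof -
  have ps: "prob_space M" and Cm: "\<forall>n h. C n h \<in> measurable M (count_space UNIV)"
    and cond: "\<forall>t \<eta> (y :: nat \<Rightarrow> nat option).
        measure M {\<omega> \<in> histev M N C t \<eta>. \<forall>h<N. outcome N (\<lambda>n k. C n k \<omega>) t h = y h}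
        = measure M (histev M N C t \<eta>) * (\<Prod>h<N. stepprob N \<theta> \<Gamma> W \<eta> t h (y h))"
    using model unfolding innovation_model_def by (auto simp only:)
  have imi: "im M N \<theta> \<Gamma> W C"
  proof (rule im.intro[OF ps], rule im_axioms.intro)
    fix n h show "C n h \<in> measurable M (count_space UNIV)" using Cm by blast
  next
    fix t \<eta> y
    show "measure M {\<omega> \<in> histev M N C t \<eta>. \<forall>h<N. outcome N (\<lambda>n k. C n k \<omega>) t h = y h}
        = measure M (histev M N C t \<eta>) * (\<Prod>h<N. stepprob N \<theta> \<Gamma> W \<eta> t h (y h))"
      by (rule cond[rule_format])
  next
    fix h assume "h < N" thus "\<theta> h > 0" using theta_pos by blast
  next
    fix h assume "h < N" thus "(\<Sum>j<N. W j h) = 1" using W_cols by blast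
  next
    fix j h assume "j < N" "h < N" thus "\<Gamma> j h \<ge> 0" using Gamma_nonneg by blast
  next
    fix h assume "h < N" thus "(\<Sum>j<N. \<Gamma> j h) < 1" using Gamma_cols by blast
  qed
  interpret im M N \<theta> \<Gamma> W C by (rule imi)
  define g where "g = pf_eigenvalue N \<Gamma>"
  have g0: "0 < g" "g < 1" using gstar unfolding g_def by auto
  have "g < 3/2 * g" using g0 by simp
  hence "\<exists>u. (\<forall>i<N. u i \<ge> 1) \<and> (\<forall>i<N. (\<Sum>j<N. \<Gamma> i j * u j) \<le> (3/2 * g) * u i)"
    using exists_u[OF N Gamma_nonneg gstar(1)] unfolding g_def by blast
  then obtain u where u1: "\<forall>i<N. u i \<ge> 1" and uG: "\<forall>i<N. (\<Sum>j<N. \<Gamma> i j * u j) \<le> (3/2 * g) * u i"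
    by blast
  have "summable (\<lambda>t. (zeta g (Suc t))\<^sup>2 / (real (Suc t))\<^sup>2 * integral\<^sup>L M (Vstar N \<theta> \<Gamma> C t))
     \<and> (AE \<omega> in M. summable (\<lambda>t. (zeta g (Suc t))\<^sup>2 / (real (Suc t))\<^sup>2 * Vstar N \<theta> \<Gamma> C t \<omega>))"
    by (rule final[OF g0 _ _ u1 uG]) (use g0 in auto)
  thus ?thesis unfolding g_def .
qed


end
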